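(* Let $n\ge2$ and let $\mathcal{S}=\{\mathbf{s}\in\mathbb{R}^n:\tfrac12\mathbf{s}^TA\mathbf{s}+\mathbf{b}^T\mathbf{s}+c=0\}$, where $A$ is a nonzero real symmetric $n\times n$ matrix, $\mathbf{b}\in\mathbb{R}^n$, $c\in\mathbb{R}$. Suppose $\mathcal{S}$ does not contain a line but contains at least two points. Then $\operatorname{rk}(A\,|\,\mathbf{b})=n$, and $\mathcal{S}$ is a rationally parameterisable hypersurface up to an exceptional set of hypersurface measure zero, i.e. there are a map $\boldsymbol{\sigma}:\mathbb{R}^{n-1}\to\mathbb{R}^n$ with rational components and a set $D\subseteq\mathbb{R}^{n-1}$ on which they are defined such that $\{\boldsymbol{\sigma}(\mathbf{t}):\mathbf{t}\in D\}\subseteq\mathcal{S}$ and its complement in $\mathcal{S}$ has hypersurface measure zero.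
   Context: $(A\,|\,\mathbf{b})$ is the $n\times(n+1)$ matrix obtained by appending the column $\mathbf{b}$ to $A$. *)

theory Defs
  imports "HOL-Analysis.Analysis"
begin

text \<open>The extra column is indexed by None of the index type 'n option (which has n+1 elements);
  the position of the column does not affect the rank.\<close>
definition augment :: "real^'n^'m \<Rightarrow> real^'m \<Rightarrow> real^('n option)^'m" where
  "augment A b = (\<chi> i j. case j of None \<Rightarrow> b $ i | Some k \<Rightarrow> A $ i $ k)"

definition quadric :: "real^'n^'n \<Rightarrow> real^'n \<Rightarrow> real \<Rightarrow> (real^'n) set" where
  "quadric A b c = {s. (1/2) * (s \<bullet> (A *v s)) + b \<bullet> s + c = 0}"

definition contains_line :: "(real^'n) set \<Rightarrow> bool" where
  "contains_line S \<longleftrightarrow> (\<exists>x v. v \<noteq> 0 \<and> (\<forall>t::real. x + t *\<^sub>R v \<in> S))"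

definition poly_fun :: "(real^'m \<Rightarrow> real) \<Rightarrow> bool" where
  "poly_fun f \<longleftrightarrow> (\<exists>(M :: ('m \<Rightarrow> nat) set) (a :: ('m \<Rightarrow> nat) \<Rightarrow> real). finite M \<and>
      (\<forall>t. f t = (\<Sum>\<alpha>\<in>M. a \<alpha> * (\<Prod>i\<in>UNIV. (t $ i) ^ (\<alpha> i)))))"

definition hausdorff_null :: "nat \<Rightarrow> 'a::metric_space set \<Rightarrow> bool" where
  "hausdorff_null d S \<longleftrightarrow> (\<forall>e>0. \<exists>C :: nat \<Rightarrow> 'a set.
      S \<subseteq> (\<Union>i. C i) \<and> (\<forall>i. bounded (C i)) \<and>
      summable (\<lambda>i. diameter (C i) ^ d) \<and> (\<Sum>i. diameter (C i) ^ d) < e)"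

end

theory Submission
  imports Defs
begin

lemma sym_dot:
  fixes A :: "real^'n^'n"
  assumes "transpose A = A"
  shows "x \<bullet> (A *v y) = y \<bullet> (A *v x)"
proof -
  have "x \<bullet> (A *v y) = (x v* A) \<bullet> y" by (simp add: dot_lmul_matrix)
  also have "x v* A = transpose A *v x" by simp
  finally show ?thesis using assms by (simp add: inner_commute)
qed

lemma quad_line:
  fixes A :: "real^'n^'n"
  assumes "transpose A = A"
  shows "(1/2) * ((x + t *\<^sub>R w) \<bullet> (A *v (x + t *\<^sub>R w))) + b \<bullet> (x + t *\<^sub>R w) + c
     = ((1/2) * (x \<bullet> (A *v x)) + b \<bullet> x + c) + t * ((A *v x + b) \<bullet> w) + t^2/2 * (w \<bullet> (A *v w))"
proof -
  have l: "A *v (x + t *\<^sub>R w) = A *v x + t *\<^sub>R (A *v w)"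
    by (simp add: matrix_vector_right_distrib matrix_vector_mult_scaleR)
  have s: "x \<bullet> (A *v w) = w \<bullet> (A *v x)" using sym_dot[OF assms] .
  show ?thesis unfolding l
    by (simp add: inner_add_left inner_add_right s algebra_simps power2_eq_square inner_commute)
qed

lemma poly_fun_const: "poly_fun (\<lambda>t. k)"
  unfolding poly_fun_def
  by (rule exI[of _ "{\<lambda>_. 0}"], rule exI[of _ "\<lambda>_. k"]) simp

lemma poly_fun_coord: "poly_fun (\<lambda>t. t $ i)"
  unfolding poly_fun_def
proof (rule exI[of _ "{\<lambda>j. if j = i then 1 else 0}"], rule exI[of _ "\<lambda>_. 1"], safe)
  fix t :: "real^'a"
  have "(\<Prod>j\<in>UNIV. (t $ j) ^ (if j = i then 1 else 0)) = (\<Prod>j\<in>UNIV. if j = i then t $ j else 1)"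
    by (rule prod.cong) auto
  also have "\<dots> = t $ i" by simp
  finally show "t $ i = (\<Sum>\<alpha>\<in>{\<lambda>j. if j = i then 1 else 0}. 1 * (\<Prod>j\<in>UNIV. (t $ j) ^ \<alpha> j))" by simp
qed

lemma poly_fun_add:
  assumes "poly_fun f" "poly_fun g" shows "poly_fun (\<lambda>t. f t + g t)"
proof -
  obtain M1 a1 where 1: "finite M1" "\<And>t. f t = (\<Sum>\<alpha>\<in>M1. a1 \<alpha> * (\<Prod>i\<in>UNIV. (t $ i) ^ (\<alpha> i)))"
    using assms(1) unfolding poly_fun_def by blast
  obtain M2 a2 where 2: "finite M2" "\<And>t. g t = (\<Sum>\<alpha>\<in>M2. a2 \<alpha> * (\<Prod>i\<in>UNIV. (t $ i) ^ (\<alpha> i)))"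
    using assms(2) unfolding poly_fun_def by blast
  let ?a = "\<lambda>\<alpha>. (if \<alpha> \<in> M1 then a1 \<alpha> else 0) + (if \<alpha> \<in> M2 then a2 \<alpha> else 0)"
  show ?thesis unfolding poly_fun_def
  proof (rule exI[of _ "M1 \<union> M2"], rule exI[of _ ?a], intro conjI allI)
    show "finite (M1 \<union> M2)" using 1 2 by simp
    fix t :: "real^'a"
    let ?m = "\<lambda>\<alpha>. (\<Prod>i\<in>UNIV. (t $ i) ^ (\<alpha> i))"
    have e1: "(\<Sum>\<alpha>\<in>M1. a1 \<alpha> * ?m \<alpha>) = (\<Sum>\<alpha>\<in>M1 \<union> M2. (if \<alpha> \<in> M1 then a1 \<alpha> else 0) * ?m \<alpha>)"
      by (rule sum.mono_neutral_cong_left) (use 1 2 in auto)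
    have e2: "(\<Sum>\<alpha>\<in>M2. a2 \<alpha> * ?m \<alpha>) = (\<Sum>\<alpha>\<in>M1 \<union> M2. (if \<alpha> \<in> M2 then a2 \<alpha> else 0) * ?m \<alpha>)"
      by (rule sum.mono_neutral_cong_left) (use 1 2 in auto)
    show "f t + g t = (\<Sum>\<alpha>\<in>M1 \<union> M2. ?a \<alpha> * ?m \<alpha>)"
      unfolding 1(2) 2(2) e1 e2 by (simp add: sum.distrib[symmetric] algebra_simps)
  qed
qed

lemma poly_fun_mult:
  assumes "poly_fun f" "poly_fun g" shows "poly_fun (\<lambda>t. f t * g t)"
proof -
  obtain M1 a1 where 1: "finite M1" "\<And>t. f t = (\<Sum>\<alpha>\<in>M1. a1 \<alpha> * (\<Prod>i\<in>UNIV. (t $ i) ^ (\<alpha> i)))"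
    using assms(1) unfolding poly_fun_def by blast
  obtain M2 a2 where 2: "finite M2" "\<And>t. g t = (\<Sum>\<alpha>\<in>M2. a2 \<alpha> * (\<Prod>i\<in>UNIV. (t $ i) ^ (\<alpha> i)))"
    using assms(2) unfolding poly_fun_def by blast
  let ?h = "\<lambda>p::('a \<Rightarrow> nat) \<times> ('a \<Rightarrow> nat). (\<lambda>i. fst p i + snd p i)"
  let ?M = "?h ` (M1 \<times> M2)"
  let ?a = "\<lambda>\<gamma>. \<Sum>p\<in>{p \<in> M1 \<times> M2. ?h p = \<gamma>}. a1 (fst p) * a2 (snd p)"
  show ?thesis unfolding poly_fun_def
  proof (rule exI[of _ ?M], rule exI[of _ ?a], intro conjI allI)
    show "finite ?M" using 1 2 by simp
    fix t :: "real^'a"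
    let ?m = "\<lambda>\<alpha>. (\<Prod>i\<in>UNIV. (t $ i) ^ (\<alpha> i))"
    have mm: "?m (\<lambda>i. \<alpha> i + \<beta> i) = ?m \<alpha> * ?m \<beta>" for \<alpha> \<beta>
      by (simp add: power_add prod.distrib)
    have "f t * g t = (\<Sum>p\<in>M1 \<times> M2. a1 (fst p) * a2 (snd p) * ?m (?h p))"
      unfolding 1(2) 2(2) sum_product sum.cartesian_product
      by (rule sum.cong) (auto simp: mm algebra_simps)
    also have "\<dots> = (\<Sum>\<gamma>\<in>?M. \<Sum>p\<in>{p \<in> M1 \<times> M2. ?h p = \<gamma>}. a1 (fst p) * a2 (snd p) * ?m (?h p))"
      by (rule sum.group[symmetric]) (use 1 2 in auto)
    also have "\<dots> = (\<Sum>\<gamma>\<in>?M. ?a \<gamma> * ?m \<gamma>)"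
    proof (rule sum.cong[OF refl])
      fix \<gamma> assume "\<gamma> \<in> ?M"
      have "(\<Sum>p\<in>{p \<in> M1 \<times> M2. ?h p = \<gamma>}. a1 (fst p) * a2 (snd p) * ?m (?h p))
          = (\<Sum>p\<in>{p \<in> M1 \<times> M2. ?h p = \<gamma>}. a1 (fst p) * a2 (snd p) * ?m \<gamma>)"
        by (rule sum.cong[OF refl]) (auto simp del: mult_eq_0_iff)
      then show "(\<Sum>p\<in>{p \<in> M1 \<times> M2. ?h p = \<gamma>}. a1 (fst p) * a2 (snd p) * ?m (?h p)) = ?a \<gamma> * ?m \<gamma>"
        by (simp add: sum_distrib_right)
    qed
    finally show "f t * g t = (\<Sum>\<gamma>\<in>?M. ?a \<gamma> * ?m \<gamma>)" .
  qed
qed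

lemma poly_fun_sum:
  assumes "finite I" "\<And>i. i \<in> I \<Longrightarrow> poly_fun (f i)"
  shows "poly_fun (\<lambda>t. \<Sum>i\<in>I. f i t)"
  using assms
proof (induction I rule: finite_induct)
  case empty then show ?case using poly_fun_const[of 0] by simp
next
  case (insert x F) then show ?case by (simp add: poly_fun_add)
qed


lemma sum_bij_option:
  fixes e :: "'m::finite option \<Rightarrow> 'n::finite"
  assumes "bij e"
  shows "(\<Sum>i\<in>UNIV. f i) = f (e None) + (\<Sum>j\<in>(UNIV::'m set). f (e (Some j)))"
proof -
  have "(\<Sum>i\<in>UNIV. f i) = (\<Sum>zz\<in>UNIV. f (e zz))"
    using sum.reindex_bij_betw[of e UNIV UNIV f] assms by (simp add: bij_betw_def)
  also have "\<dots> = f (e None) + (\<Sum>zz\<in>range Some. f (e zz))"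
    by (subst UNIV_option_conv) (simp add: sum.insert)
  also have "(\<Sum>zz\<in>range Some. f (e zz)) = (\<Sum>j\<in>(UNIV::'m set). f (e (Some j)))"
    by (subst sum.reindex) (auto simp: inj_on_def)
  finally show ?thesis .
qed

lemma param:
  fixes e :: "'m::finite option \<Rightarrow> 'n::finite" and V :: "real^'m \<Rightarrow> real^'n" and w :: "real^'n"
  assumes "bij e"
    and V_def: "\<And>t zz. V t $ e zz = (case zz of None \<Rightarrow> (\<Sum>j\<in>UNIV. (t$j)^2) - 1 | Some j \<Rightarrow> 2 * t$j)"
    and "w \<noteq> 0"
  shows "\<exists>t \<mu>. \<mu> \<noteq> 0 \<and> V t = \<mu> *\<^sub>R w"
proof -
  define r where "r = norm w"
  define wN where "wN = w $ e None"
  define S' where "S' = (\<Sum>j\<in>(UNIV::'m set). (w $ e (Some j))^2)"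
  have rpos: "r > 0" using assms(3) by (simp add: r_def)
  have "r^2 = w \<bullet> w" by (simp add: r_def power2_norm_eq_inner)
  also have "\<dots> = (\<Sum>i\<in>UNIV. (w $ i)^2)" by (simp add: inner_vec_def power2_eq_square)
  also have "\<dots> = wN^2 + S'" unfolding wN_def S'_def by (rule sum_bij_option[OF assms(1)])
  finally have rr: "r^2 = wN^2 + S'" .
  have S'ge: "S' \<ge> 0" unfolding S'_def by (simp add: sum_nonneg)
  have wNle: "wN \<le> r" using component_le_norm_cart[of w "e None"] by (simp add: wN_def r_def)
  have surj: "\<exists>zz. i = e zz" for i using assms(1) by (metis bij_pointE)
  show ?thesis
  proof (cases "wN = r")
    case True
    then have "S' = 0" using rr by simp
    then have z: "w $ e (Some j) = 0" for j
      unfolding S'_def using sum_nonneg_eq_0_iff[of UNIV "\<lambda>j. (w $ e (Some j))^2"] by simp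
    have "V 0 = (- 1 / r) *\<^sub>R w"
    proof (subst vec_eq_iff, rule allI)
      fix i obtain zz where i: "i = e zz" using surj by blast
      show "V 0 $ i = ((- 1 / r) *\<^sub>R w) $ i"
        using rpos True z unfolding i V_def wN_def by (cases zz) auto
    qed
    then show ?thesis using rpos by (intro exI[of _ 0] exI[of _ "-1/r"]) auto
  next
    case False
    define d where "d = r - wN"
    have dpos: "d > 0" using False wNle by (simp add: d_def)
    define t :: "real^'m" where "t = (\<chi> j. w $ e (Some j) / d)"
    have st: "(\<Sum>j\<in>UNIV. (t$j)^2) = S' / d^2"
      by (simp add: t_def S'_def power_divide sum_divide_distrib)
    have "S' / d^2 - 1 = 2 / d * wN"
    proof -
      have "S' = (r - wN) * (r + wN)" using rr by (simp add: algebra_simps power2_eq_square)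
      then have "S' = d * (r + wN)" by (simp add: d_def)
      then have "S' / d^2 = (r + wN) / d" using dpos by (simp add: power2_eq_square)
      also have "\<dots> = 1 + 2 / d * wN" using dpos by (simp add: d_def field_simps)
      finally show ?thesis by simp
    qed
    then have "V t = (2 / d) *\<^sub>R w"
    proof (subst vec_eq_iff, intro allI)
      fix i assume h: "S' / d^2 - 1 = 2 / d * wN"
      obtain zz where i: "i = e zz" using surj by blast
      show "V t $ i = ((2 / d) *\<^sub>R w) $ i"
        using h st unfolding i V_def wN_def by (cases zz) (auto simp: t_def)
    qed
    then show ?thesis using dpos by (intro exI[of _ t] exI[of _ "2/d"]) auto
  qed
qed

lemma rank_aug:
  fixes A :: "real^'n^'n" and b :: "real^'n"
  assumes symm: "transpose A = A"
    and H: "\<And>v. v \<noteq> 0 \<Longrightarrow> A *v v = 0 \<Longrightarrow> b \<bullet> v = 0 \<Longrightarrow> False"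
  shows "rank (augment A b) = CARD('n)"
proof (rule ccontr)
  assume ne: "rank (augment A b) \<noteq> CARD('n)"
  have "rank (augment A b) \<le> CARD('n)" using rank_bound[of "augment A b"] by simp
  then have "rank (transpose (augment A b)) < CARD('n)" using ne by (simp add: rank_transpose)
  then have "\<not> inj ((*v) (transpose (augment A b)))" by (simp add: less_rank_noninjective)
  then obtain x y where xy: "x \<noteq> y" "transpose (augment A b) *v x = transpose (augment A b) *v y"
    unfolding inj_def by blast
  define v where "v = x - y"
  have v0: "v \<noteq> 0" using xy by (simp add: v_def)
  have M0: "transpose (augment A b) *v v = 0" using xy by (simp add: v_def matrix_vector_mult_diff_distrib)
  have "A *v v = 0"
  proof (subst vec_eq_iff, rule allI)
    fix k
    have "(transpose (augment A b) *v v) $ Some k = 0" using M0 by simp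
    then have "(transpose A *v v) $ k = 0"
      by (simp add: matrix_vector_mult_def transpose_def augment_def)
    then show "(A *v v) $ k = 0 $ k" using symm by simp
  qed
  moreover have "b \<bullet> v = 0"
  proof -
    have "(transpose (augment A b) *v v) $ None = 0" using M0 by simp
    then show ?thesis
      by (simp add: matrix_vector_mult_def transpose_def augment_def inner_vec_def)
  qed
  ultimately show False using H v0 by blast
qed


lemma poly_fun_cong: "(\<And>t. f t = g t) \<Longrightarrow> poly_fun g \<Longrightarrow> poly_fun f"
proof -
  assume "\<And>t. f t = g t" "poly_fun g"
  then show ?thesis by (metis ext)
qed

lemma hnull_sing:
  fixes s0 :: "'a::metric_space"
  assumes "T \<subseteq> {s0}" "d > 0"
  shows "hausdorff_null d T"
  unfolding hausdorff_null_def
proof (intro allI impI)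
  fix e :: real assume "e > 0"
  show "\<exists>C :: nat \<Rightarrow> 'a set. T \<subseteq> (\<Union>i. C i) \<and> (\<forall>i. bounded (C i)) \<and>
      summable (\<lambda>i. diameter (C i) ^ d) \<and> (\<Sum>i. diameter (C i) ^ d) < e"
    using assms \<open>e > 0\<close> by (intro exI[of _ "\<lambda>_. {s0}"]) (auto simp: zero_power)
qed

theorem lemma3:
  fixes A :: "real^'n^'n" and b :: "real^'n" and c :: real
  assumes dims: "CARD('n) = CARD('m) + 1"
    and symm: "transpose A = A"
    and nonzero: "A \<noteq> 0"
    and noline: "\<not> contains_line (quadric A b c)"
    and two_pts: "\<exists>x\<in>quadric A b c. \<exists>y\<in>quadric A b c. x \<noteq> y"
  shows "rank (augment A b) = CARD('n) \<and>
    (\<exists>(p :: 'n \<Rightarrow> real^'m \<Rightarrow> real) (q :: 'n \<Rightarrow> real^'m \<Rightarrow> real) (D :: (real^'m) set).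
       (\<forall>k. poly_fun (p k) \<and> poly_fun (q k)) \<and>
       (\<forall>t\<in>D. \<forall>k. q k t \<noteq> 0) \<and>
       (\<lambda>t. \<chi> k. p k t / q k t) ` D \<subseteq> quadric A b c \<and>
       hausdorff_null CARD('m) (quadric A b c - (\<lambda>t. \<chi> k. p k t / q k t) ` D))"
proof -
  define Q where "Q x = (1/2) * (x \<bullet> (A *v x)) + b \<bullet> x + c" for x
  have qS: "quadric A b c = {x. Q x = 0}" by (simp add: quadric_def Q_def)
  have QL: "Q (x + t *\<^sub>R w) = Q x + t * ((A *v x + b) \<bullet> w) + t^2/2 * (w \<bullet> (A *v w))" for x t w
    unfolding Q_def by (rule quad_line[OF symm])
  obtain s0 where s0: "Q s0 = 0" using two_pts qS by auto
  define g where "g = A *v s0 + b"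
  have rk: "rank (augment A b) = CARD('n)"
  proof (rule rank_aug[OF symm])
    fix v :: "real^'n" assume v: "v \<noteq> 0" "A *v v = 0" "b \<bullet> v = 0"
    have "(A *v s0) \<bullet> v = 0" using sym_dot[OF symm, of v s0] v(2) by (simp add: inner_commute)
    then have "\<forall>t. s0 + t *\<^sub>R v \<in> quadric A b c"
      using QL[of s0 _ v] s0 v by (simp add: qS inner_add_left)
    then show False using noline v(1) unfolding contains_line_def by blast
  qed
  have wAw: "w \<bullet> (A *v w) \<noteq> 0" and gw: "g \<bullet> w = - (w \<bullet> (A *v w)) / 2"
    if "Q (s0 + w) = 0" "w \<noteq> 0" for w
  proof -
    have 1: "Q (s0 + w) = g \<bullet> w + (w \<bullet> (A *v w)) / 2" using QL[of s0 1 w] s0 by (simp add: g_def)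
    then show "g \<bullet> w = - (w \<bullet> (A *v w)) / 2" using that by simp
    show "w \<bullet> (A *v w) \<noteq> 0"
    proof
      assume z: "w \<bullet> (A *v w) = 0"
      then have "g \<bullet> w = 0" using 1 that by simp
      then have "\<forall>t. s0 + t *\<^sub>R w \<in> quadric A b c"
        using QL[of s0 _ w] s0 z by (simp add: qS g_def)
      then show False using noline that(2) unfolding contains_line_def by blast
    qed
  qed
  have "card (UNIV :: 'm option set) = card (UNIV :: 'n set)"
  proof -
    have "card (UNIV :: 'm option set) = card (insert None (range (Some :: 'm \<Rightarrow> _)))"
      by (simp add: UNIV_option_conv)
    also have "\<dots> = CARD('m) + 1" by (simp add: card_image)
    finally show ?thesis using dims by simp
  qed
  then obtain e :: "'m option \<Rightarrow> 'n" where e: "bij e"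
    using bij_betw_iff_card[of "UNIV :: 'm option set" "UNIV :: 'n set"] by auto
  define V where "V t = (\<chi> i. case inv e i of None \<Rightarrow> (\<Sum>j\<in>UNIV. (t$j)^2) - 1 | Some j \<Rightarrow> 2 * t$j)"
    for t :: "real^'m"
  have Ve: "V t $ e z = (case z of None \<Rightarrow> (\<Sum>j\<in>UNIV. (t$j)^2) - 1 | Some j \<Rightarrow> 2 * t$j)" for t z
    by (simp add: V_def bij_is_inj[OF e])
  define qq where "qq t = V t \<bullet> (A *v V t)" for t
  define p where "p k t = s0$k * qq t - 2 * (g \<bullet> V t) * V t $ k" for k t
  define q where "q k t = qq t" for k :: 'n and t
  define D where "D = {t. qq t \<noteq> 0}"
  define \<sigma> where "\<sigma> = (\<lambda>t. \<chi> k. p k t / q k t)"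
  have \<sigma>eq: "\<sigma> t = s0 + (-2 * (g \<bullet> V t) / qq t) *\<^sub>R V t" if "t \<in> D" for t
    using that by (simp add: vec_eq_iff \<sigma>_def p_def q_def D_def field_simps)
  have polyV: "poly_fun (\<lambda>t. V t $ i)" for i
  proof (cases "inv e i")
    case None
    then have "V t $ i = (\<Sum>j\<in>UNIV. t$j * t$j) + (-1)" for t by (simp add: V_def power2_eq_square)
    then show ?thesis
      by (rule poly_fun_cong) (intro poly_fun_add poly_fun_sum poly_fun_mult poly_fun_coord poly_fun_const finite)
  next
    case (Some j)
    then have "V t $ i = 2 * t$j" for t by (simp add: V_def)
    then show ?thesis by (rule poly_fun_cong) (intro poly_fun_mult poly_fun_coord poly_fun_const)
  qed
  have polyqq: "poly_fun qq"
  proof -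
    have "qq t = (\<Sum>i\<in>UNIV. V t $ i * (\<Sum>j\<in>UNIV. A$i$j * V t $ j))" for t
      by (simp add: qq_def inner_vec_def matrix_vector_mult_def)
    then show ?thesis
      by (rule poly_fun_cong) (intro poly_fun_sum poly_fun_mult polyV poly_fun_const finite)
  qed
  have polyg: "poly_fun (\<lambda>t. g \<bullet> V t)"
  proof -
    have "g \<bullet> V t = (\<Sum>i\<in>UNIV. g $ i * V t $ i)" for t
      by (simp add: inner_vec_def)
    then show ?thesis
      by (rule poly_fun_cong) (intro poly_fun_sum poly_fun_mult polyV poly_fun_const finite)
  qed
  have polyp: "poly_fun (p k)" for k
  proof -
    have "p k t = s0$k * qq t + (-2) * (g \<bullet> V t) * V t $ k" for t by (simp add: p_def)
    then show ?thesis
      by (rule poly_fun_cong) (intro poly_fun_add poly_fun_mult polyV polyqq polyg poly_fun_const)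
  qed
  have img: "\<sigma> ` D \<subseteq> quadric A b c"
  proof
    fix x assume "x \<in> \<sigma> ` D"
    then obtain t where t: "t \<in> D" "x = \<sigma> t" by blast
    define G where "G = g \<bullet> V t"
    have nz: "qq t \<noteq> 0" using t by (simp add: D_def)
    have "Q x = (-2 * G / qq t) * G + (-2 * G / qq t)^2 / 2 * qq t"
      using QL[of s0 "-2 * (g \<bullet> V t) / qq t" "V t"] s0 t \<sigma>eq[OF t(1)]
      by (simp add: G_def g_def qq_def)
    also have "\<dots> = 0" using nz by (simp add: field_simps power2_eq_square)
    finally show "x \<in> quadric A b c" by (simp add: qS)
  qed
  have comp: "quadric A b c - \<sigma> ` D \<subseteq> {s0}"
  proof
    fix s assume sS: "s \<in> quadric A b c - \<sigma> ` D"
    show "s \<in> {s0}"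
    proof (rule ccontr)
      assume "s \<notin> {s0}"
      define w where "w = s - s0"
      have w0: "w \<noteq> 0" using \<open>s \<notin> {s0}\<close> by (simp add: w_def)
      have Qw: "Q (s0 + w) = 0" using sS by (simp add: qS w_def)
      obtain t \<mu> where tm: "\<mu> \<noteq> 0" "V t = \<mu> *\<^sub>R w" using param[OF e Ve w0] by blast
      have wa: "w \<bullet> (A *v w) \<noteq> 0" using wAw[OF Qw w0] .
      have qqt: "qq t = \<mu>^2 * (w \<bullet> (A *v w))"
        using tm by (simp add: qq_def matrix_vector_mult_scaleR power2_eq_square)
      have tD: "t \<in> D" using qqt tm wa by (simp add: D_def)
      have "(-2 * (g \<bullet> V t) / qq t) * \<mu> = 1"
        using qqt tm wa gw[OF Qw w0] by (simp add: field_simps power2_eq_square)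
      then have "\<sigma> t = s0 + w" using \<sigma>eq[OF tD] tm by simp
      then have "s \<in> \<sigma> ` D" using tD by (simp add: w_def image_iff) (metis add.commute diff_add_cancel)
      then show False using sS by blast
    qed
  qed
  have P1: "\<forall>k. poly_fun (p k) \<and> poly_fun (q k)" using polyp polyqq by (simp add: q_def[abs_def])
  have P2: "\<forall>t\<in>D. \<forall>k. q k t \<noteq> 0" by (simp add: q_def D_def)
  have P3: "(\<lambda>t. \<chi> k. p k t / q k t) ` D \<subseteq> quadric A b c" using img by (simp add: \<sigma>_def)
  have P4: "hausdorff_null CARD('m) (quadric A b c - (\<lambda>t. \<chi> k. p k t / q k t) ` D)"
    using comp by (intro hnull_sing[of _ s0]) (auto simp: \<sigma>_def)
  show ?thesis using rk P1 P2 P3 P4 by blast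
qed

end
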